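(* Let $\mathcal{H}$ be a complex separable Hilbert space and let $A$ be a bounded selfadjoint operator on $\mathcal{H}$. Then $A$ is an effect (i.e. $\mathbb{O}\le A\le I$) if and only if $$0\le \|A\|+\|I-A\|-1\le 1-\bigl|\,\|A\|-\|I-A\|\,\bigr|.$$
   Context: $\|\cdot\|$ denotes the operator norm, $I$ the identity and $\mathbb{O}$ the zero operator on $\mathcal{H}$; $A\le B$ means $\langle\varphi,A\varphi\rangle\le\langle\varphi,B\varphi\rangle$ for all $\varphi\in\mathcal{H}$. *)

theory Defs
  imports "HOL-Analysis.Analysis" "HOL-Library.Complex_Order"
begin

class complex_inner_space = real_normed_vector +
  fixes scaleC :: "complex \<Rightarrow> 'a \<Rightarrow> 'a"
    and cinner :: "'a \<Rightarrow> 'a \<Rightarrow> complex"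
  assumes scaleC_add_right: "scaleC a (x + y) = scaleC a x + scaleC a y"
    and scaleC_add_left: "scaleC (a + b) x = scaleC a x + scaleC b x"
    and scaleC_scaleC: "scaleC a (scaleC b x) = scaleC (a * b) x"
    and scaleC_one: "scaleC 1 x = x"
    and scaleR_scaleC: "scaleR r x = scaleC (complex_of_real r) x"
    and cinner_commute: "cinner x y = cnj (cinner y x)"
    and cinner_add_right: "cinner x (y + z) = cinner x y + cinner x z"
    and cinner_scaleC_right: "cinner x (scaleC c y) = c * cinner x y"
    and cinner_ge_zero: "0 \<le> cinner x x"
    and cinner_eq_zero_iff: "cinner x x = 0 \<longleftrightarrow> x = 0"
    and norm_eq_sqrt_cinner: "norm x = sqrt (Re (cinner x x))"

class chilbert_space = complex_inner_space + complete_space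

definition bounded_clinear_op :: "('a::complex_inner_space \<Rightarrow> 'a) \<Rightarrow> bool" where
  "bounded_clinear_op A \<longleftrightarrow>
     (\<forall>x y. A (x + y) = A x + A y) \<and>
     (\<forall>c x. A (scaleC c x) = scaleC c (A x)) \<and>
     (\<exists>K. \<forall>x. norm (A x) \<le> norm x * K)"

definition selfadjoint :: "('a::complex_inner_space \<Rightarrow> 'a) \<Rightarrow> bool" where
  "selfadjoint A \<longleftrightarrow> (\<forall>x y. cinner (A x) y = cinner x (A y))"

definition loewner_le :: "('a::complex_inner_space \<Rightarrow> 'a) \<Rightarrow> ('a \<Rightarrow> 'a) \<Rightarrow> bool" where
  "loewner_le A B \<longleftrightarrow> (\<forall>\<phi>. cinner \<phi> (A \<phi>) \<le> cinner \<phi> (B \<phi>))"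

definition effect :: "('a::complex_inner_space \<Rightarrow> 'a) \<Rightarrow> bool" where
  "effect A \<longleftrightarrow> loewner_le (\<lambda>_. 0) A \<and> loewner_le A id"

definition separable_space :: "'a::metric_space itself \<Rightarrow> bool" where
  "separable_space _ \<longleftrightarrow> (\<exists>D::'a set. countable D \<and> closure D = UNIV)"


text \<open>Sanity check: the class is inhabited (complex numbers, <x,y> = cnj x * y).\<close>
instantiation complex :: chilbert_space
begin
definition scaleC_complex :: "complex \<Rightarrow> complex \<Rightarrow> complex" where "scaleC_complex a x = a * x"
definition cinner_complex :: "complex \<Rightarrow> complex \<Rightarrow> complex" where "cinner_complex x y = cnj x * y"
instance
proof
  fix x :: complex
  show "0 \<le> cinner x x" by (simp add: cinner_complex_def less_eq_complex_def)
  show "norm x = sqrt (Re (cinner x x))"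
    by (simp add: cinner_complex_def cmod_def power2_eq_square)
qed (auto simp: scaleC_complex_def cinner_complex_def algebra_simps scaleR_conv_of_real
        complex_eq_iff)
end

end

theory Submission
  imports Defs
begin

lemma cinner_add_left: fixes x :: "'a::complex_inner_space" shows "cinner (x+y) z = cinner x z + cinner y z"
proof -
  have "cinner (x+y) z = cnj (cinner z (x+y))" by (rule cinner_commute)
  also have "\<dots> = cnj (cinner z x) + cnj (cinner z y)" by (simp only: cinner_add_right complex_cnj_add)
  also have "\<dots> = cinner x z + cinner y z" by (simp only: cinner_commute[of x z] cinner_commute[of y z] complex_cnj_cnj)
  finally show ?thesis .
qed
lemma cinner_scaleC_left: fixes x :: "'a::complex_inner_space" shows "cinner (scaleC c x) y = cnj c * cinner x y"
proof -
  have "cinner (scaleC c x) y = cnj (cinner y (scaleC c x))" by (rule cinner_commute)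
  also have "\<dots> = cnj c * cnj (cinner y x)" by (simp only: cinner_scaleC_right complex_cnj_mult)
  also have "\<dots> = cnj c * cinner x y" by (simp only: cinner_commute[of x y] complex_cnj_cnj)
  finally show ?thesis .
qed
lemma cinner_self_Im: fixes x :: "'a::complex_inner_space" shows "Im (cinner x x) = 0"
  using cinner_ge_zero[of x] unfolding less_eq_complex_def by simp
lemma norm_sq: fixes x :: "'a::complex_inner_space" shows "(norm x)^2 = Re (cinner x x)"
proof -
  have "0 \<le> Re (cinner x x)" using cinner_ge_zero[of x] unfolding less_eq_complex_def by simp
  then show ?thesis by (simp only: norm_eq_sqrt_cinner[of x] real_sqrt_pow2)
qed
lemma scaleC_m1: fixes x :: "'a::complex_inner_space" shows "scaleC (-1) x = - x"
proof -
  have "scaleC (-1) x = scaleC (complex_of_real (-1)) x" by simp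
  also have "\<dots> = scaleR (-1) x" by (rule scaleR_scaleC[symmetric])
  also have "\<dots> = - x" by (rule scaleR_minus1_left)
  finally show ?thesis .
qed
lemma cinner_minus_right: fixes x :: "'a::complex_inner_space" shows "cinner x (- y) = - cinner x y"
  using cinner_scaleC_right[of x "-1" y] unfolding scaleC_m1 by simp
lemma cinner_diff_right: fixes x :: "'a::complex_inner_space" shows "cinner x (y - z) = cinner x y - cinner x z"
  by (simp only: diff_conv_add_uminus cinner_add_right cinner_minus_right)
lemma cinner_diff_left: fixes x :: "'a::complex_inner_space" shows "cinner (y - z) x = cinner y x - cinner z x"
proof -
  have "cinner (y - z) x = cnj (cinner x (y - z))" by (rule cinner_commute)
  also have "\<dots> = cnj (cinner x y) - cnj (cinner x z)" by (simp only: cinner_diff_right complex_cnj_diff)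
  also have "\<dots> = cinner y x - cinner z x" by (simp only: cinner_commute[of y x] cinner_commute[of z x] complex_cnj_cnj)
  finally show ?thesis .
qed
lemma scaleC_diff_right: fixes x :: "'a::complex_inner_space" shows "scaleC c (x - y) = scaleC c x - scaleC c y"
proof -
  have "scaleC c x = scaleC c (x - y) + scaleC c y" using scaleC_add_right[of c "x-y" y] by simp
  then show ?thesis by (simp add: algebra_simps)
qed
lemma
  fixes w :: complex and t :: real
  shows a1: "(- (of_real t * cnj w)) * w = - of_real (t * (cmod w)^2)"
    and a2: "cnj (- (of_real t * cnj w)) * cnj w = - of_real (t * (cmod w)^2)"
    and a3: "cnj (- (of_real t * cnj w)) * (- (of_real t * cnj w)) = of_real (t^2 * (cmod w)^2)"
proof -
  have n: "w * cnj w = of_real ((cmod w)^2)" "cnj w * w = of_real ((cmod w)^2)"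
    using complex_norm_square[of w] by (simp_all add: mult.commute)
  show "(- (of_real t * cnj w)) * w = - of_real (t * (cmod w)^2)"
    using n(2) by (simp add: mult.assoc)
  show "cnj (- (of_real t * cnj w)) * cnj w = - of_real (t * (cmod w)^2)"
    using n(1) by (simp add: mult.assoc)
  have "cnj (- (of_real t * cnj w)) * (- (of_real t * cnj w)) = of_real t * of_real t * (w * cnj w)"
    by (simp add: algebra_simps)
  then show "cnj (- (of_real t * cnj w)) * (- (of_real t * cnj w)) = of_real (t^2 * (cmod w)^2)"
    using n(1) by (simp add: power2_eq_square)
qed
lemma re_calc: "Re (a + - of_real (t * (cmod w)^2) + - of_real (t * (cmod w)^2) + of_real (t^2 * (cmod w)^2) * b) = Re a - 2 * t * (cmod w)^2 + t^2 * (cmod w)^2 * Re b" for a b w :: complex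
  by simp

lemma cs_gen:
  fixes T :: "'a::complex_inner_space \<Rightarrow> 'a"
  assumes add: "\<And>x y. T (x + y) = T x + T y"
    and lin: "\<And>c x. T (scaleC c x) = scaleC c (T x)"
    and herm: "\<And>x y. cinner (T x) y = cinner x (T y)"
    and pos: "\<And>z. 0 \<le> Re (cinner z (T z))"
  shows "(cmod (cinner y (T x)))^2 \<le> Re (cinner x (T x)) * Re (cinner y (T y))"
proof -
  define w where "w = cinner x (T y)"
  have yx: "cinner y (T x) = cnj w"
    unfolding w_def using cinner_commute[of y "T x"] herm[of x y] by simp
  have exp: "cinner (x + scaleC s y) (T (x + scaleC s y)) =
     cinner x (T x) + s * w + cnj s * cnj w + cnj s * s * cinner y (T y)" for s
    by (simp add: add lin cinner_add_left cinner_add_right cinner_scaleC_left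
        cinner_scaleC_right yx w_def algebra_simps)
  have q: "0 \<le> Re (cinner x (T x)) - 2 * t * (cmod w)^2 + t^2 * (cmod w)^2 * Re (cinner y (T y))" for t
  proof -
    have "0 \<le> Re (cinner (x + scaleC (- (of_real t * cnj w)) y) (T (x + scaleC (- (of_real t * cnj w)) y)))"
      by (rule pos)
    also have "\<dots> = Re (cinner x (T x)) - 2 * t * (cmod w)^2 + t^2 * (cmod w)^2 * Re (cinner y (T y))"
      unfolding exp a1 a2 a3 by (rule re_calc)
    finally show ?thesis .
  qed
  show ?thesis
  proof (cases "w = 0")
    case True then show ?thesis using yx pos[of x] pos[of y] by simp
  next
    case False
    hence wp: "(cmod w)^2 > 0" by simp
    show ?thesis
    proof (cases "Re (cinner y (T y)) = 0")
      case True
      have "0 \<le> Re (cinner x (T x)) - 2 * ((Re (cinner x (T x)) + 1) / (2 * (cmod w)^2)) * (cmod w)^2"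
        using q[of "(Re (cinner x (T x)) + 1) / (2 * (cmod w)^2)"] True by simp
      also have "\<dots> = -1" using wp by (simp add: field_simps)
      finally show ?thesis by simp
    next
      case False
      hence yp: "Re (cinner y (T y)) > 0" using pos[of y] by simp
      have h: "0 \<le> Re (cinner x (T x)) - 2 * (1 / Re (cinner y (T y))) * (cmod w)^2 + (1 / Re (cinner y (T y)))^2 * (cmod w)^2 * Re (cinner y (T y))"
        by (rule q)
      have "0 \<le> Re (cinner x (T x)) * Re (cinner y (T y)) - (cmod w)^2"
      proof -
        have "0 \<le> Re (cinner y (T y)) * (Re (cinner x (T x)) - 2 * (1 / Re (cinner y (T y))) * (cmod w)^2 + (1 / Re (cinner y (T y)))^2 * (cmod w)^2 * Re (cinner y (T y)))"
          using h yp by simp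
        also have "\<dots> = Re (cinner x (T x)) * Re (cinner y (T y)) - (cmod w)^2"
          using yp by (simp add: field_simps power2_eq_square)
        finally show ?thesis .
      qed
      then show ?thesis using yx by simp
    qed
  qed
qed


lemma cinner_zero_right: fixes x :: "'a::complex_inner_space" shows "cinner x 0 = 0"
  using cinner_add_right[of x 0 0] by simp

lemma cinner_self_cmod: fixes z :: "'a::complex_inner_space" shows "cmod (cinner z z) = (norm z)^2"
proof -
  have "cinner z z = complex_of_real (Re (cinner z z))"
    using cinner_self_Im[of z] by (simp add: complex_eq_iff)
  moreover have "0 \<le> Re (cinner z z)" using norm_sq[of z] by (metis zero_le_power2)
  ultimately show ?thesis using norm_sq[of z] by (metis norm_of_real abs_of_nonneg)
qed

lemma cs_simple: fixes x :: "'a::complex_inner_space" shows "cmod (cinner y x) \<le> norm y * norm x"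
proof -
  have "(cmod (cinner y (id x)))^2 \<le> Re (cinner x (id x)) * Re (cinner y (id y))"
    by (rule cs_gen) (auto simp: norm_sq[symmetric])
  hence "(cmod (cinner y x))^2 \<le> (norm y * norm x)^2"
    by (simp add: norm_sq[symmetric] power_mult_distrib mult.commute)
  then show ?thesis by (rule power2_le_imp_le) simp
qed

lemma contr:
  fixes T :: "'a::complex_inner_space \<Rightarrow> 'a"
  assumes add: "\<And>x y. T (x + y) = T x + T y"
    and lin: "\<And>c x. T (scaleC c x) = scaleC c (T x)"
    and herm: "\<And>x y. cinner (T x) y = cinner x (T y)"
    and pos: "\<And>z. 0 \<le> Re (cinner z (T z))"
    and le: "\<And>z. Re (cinner z (T z)) \<le> (norm z)^2"
  shows "norm (T x) \<le> norm x"
proof -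
  have "(cmod (cinner (T x) (T x)))^2 \<le> Re (cinner x (T x)) * Re (cinner (T x) (T (T x)))"
    by (rule cs_gen[OF add lin herm pos])
  also have "\<dots> \<le> (norm x)^2 * (norm (T x))^2"
    by (rule mult_mono[OF le le]) (simp_all add: pos)
  finally have h0: "((norm (T x))^2)^2 \<le> (norm x)^2 * (norm (T x))^2"
    by (simp only: cinner_self_cmod)
  have h: "(norm (T x))^2 * (norm (T x))^2 \<le> (norm x)^2 * (norm (T x))^2"
    using h0 by (simp only: power2_eq_square[of "(norm (T x))^2"])
  show ?thesis
  proof (cases "norm (T x) = 0")
    case True then show ?thesis by simp
  next
    case False
    hence "(norm (T x))^2 > 0" by simp
    then have "(norm (T x))^2 \<le> (norm x)^2" using h by (meson mult_right_le_imp_le)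
    then show ?thesis by (rule power2_le_imp_le) simp
  qed
qed

theorem mainTheorem1:
  fixes A :: "'a::chilbert_space \<Rightarrow> 'a"
  assumes "separable_space TYPE('a)"
    and "\<exists>x::'a. x \<noteq> 0"
    and "bounded_clinear_op A"
    and "selfadjoint A"
  shows "effect A \<longleftrightarrow>
    (0 \<le> onorm A + onorm (\<lambda>x. x - A x) - 1 \<and>
     onorm A + onorm (\<lambda>x. x - A x) - 1 \<le> 1 - \<bar>onorm A - onorm (\<lambda>x. x - A x)\<bar>)"
proof -
  define S where "S = (\<lambda>x::'a. x - A x)"
  obtain K where addA: "\<And>x y. A (x + y) = A x + A y"
    and linA: "\<And>c x. A (scaleC c x) = scaleC c (A x)"
    and KA: "\<And>x. norm (A x) \<le> norm x * K"
    using assms(3) unfolding bounded_clinear_op_def by blast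
  have hermA: "\<And>x y. cinner (A x) y = cinner x (A y)"
    using assms(4) unfolding selfadjoint_def by blast
  have blA: "bounded_linear A"
  proof (rule bounded_linear_intro[OF addA _ KA])
    fix r x show "A (scaleR r x) = scaleR r (A x)"
      by (simp add: scaleR_scaleC linA)
  qed
  have blS: "bounded_linear S" unfolding S_def
    by (intro bounded_linear_sub bounded_linear_ident blA)
  have addS: "\<And>x y. S (x + y) = S x + S y" unfolding S_def by (simp add: addA algebra_simps)
  have linS: "\<And>c x. S (scaleC c x) = scaleC c (S x)" unfolding S_def by (simp add: linA scaleC_diff_right)
  have hermS: "\<And>x y. cinner (S x) y = cinner x (S y)" unfolding S_def
    by (simp add: cinner_diff_left cinner_diff_right hermA)
  have ReS: "\<And>z. Re (cinner z (S z)) = (norm z)^2 - Re (cinner z (A z))"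
    unfolding S_def by (simp add: cinner_diff_right norm_sq)
  have ImA: "\<And>z. Im (cinner z (A z)) = 0"
  proof -
    fix z
    have "cinner z (A z) = cnj (cinner z (A z))"
      using hermA[of z z] cinner_commute[of "A z" z] by simp
    then show "Im (cinner z (A z)) = 0" by (metis cnj.simps(2) neg_equal_zero)
  qed
  have eff: "effect A \<longleftrightarrow> (\<forall>z. 0 \<le> Re (cinner z (A z)) \<and> Re (cinner z (A z)) \<le> (norm z)^2)"
    unfolding effect_def loewner_le_def less_eq_complex_def
    by (simp add: cinner_zero_right ImA cinner_self_Im norm_sq) blast
  define a where "a = onorm A"
  define b where "b = onorm S"
  have a0: "0 \<le> a" unfolding a_def by (rule onorm_pos_le[OF blA])
  have b0: "0 \<le> b" unfolding b_def by (rule onorm_pos_le[OF blS])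
  have ab1: "1 \<le> a + b"
  proof -
    obtain x :: 'a where x: "x \<noteq> 0" using assms(2) by blast
    have "norm x = norm (A x + S x)" unfolding S_def by simp
    also have "\<dots> \<le> norm (A x) + norm (S x)" by (rule norm_triangle_ineq)
    also have "\<dots> \<le> a * norm x + b * norm x"
      unfolding a_def b_def by (intro add_mono onorm blA blS)
    finally have "1 * norm x \<le> (a + b) * norm x" by (simp add: algebra_simps)
    then show ?thesis using x by (simp add: mult_le_cancel_right)
  qed
  have cond: "(0 \<le> a + b - 1 \<and> a + b - 1 \<le> 1 - \<bar>a - b\<bar>) \<longleftrightarrow> (a \<le> 1 \<and> b \<le> 1)"
    using ab1 by (auto simp: abs_if)
  have "effect A \<longleftrightarrow> (a \<le> 1 \<and> b \<le> 1)"
  proof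
    assume e: "effect A"
    hence p: "\<And>z. 0 \<le> Re (cinner z (A z))" and q: "\<And>z. Re (cinner z (A z)) \<le> (norm z)^2"
      using eff by auto
    have pS: "\<And>z. 0 \<le> Re (cinner z (S z))" using q ReS by simp
    have qS: "\<And>z. Re (cinner z (S z)) \<le> (norm z)^2" using p ReS by simp
    have "a \<le> 1" unfolding a_def
      by (rule onorm_bound) (simp_all add: contr[OF addA linA hermA p q])
    moreover have "b \<le> 1" unfolding b_def
      by (rule onorm_bound) (simp_all add: contr[OF addS linS hermS pS qS])
    ultimately show "a \<le> 1 \<and> b \<le> 1" by simp
  next
    assume ab: "a \<le> 1 \<and> b \<le> 1"
    have nA: "norm (A z) \<le> norm z" for z
    proof -
      have "norm (A z) \<le> a * norm z" unfolding a_def by (rule onorm[OF blA])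
      also have "\<dots> \<le> 1 * norm z" using ab by (intro mult_right_mono) simp_all
      finally show ?thesis by simp
    qed
    have nS: "norm (S z) \<le> norm z" for z
    proof -
      have "norm (S z) \<le> b * norm z" unfolding b_def by (rule onorm[OF blS])
      also have "\<dots> \<le> 1 * norm z" using ab by (intro mult_right_mono) simp_all
      finally show ?thesis by simp
    qed
    have bnd: "Re (cinner z (T z)) \<le> (norm z)^2" if nT: "norm (T z) \<le> norm z" for T :: "'a \<Rightarrow> 'a" and z
    proof -
      have "Re (cinner z (T z)) \<le> cmod (cinner z (T z))" by (rule complex_Re_le_cmod)
      also have "\<dots> \<le> norm z * norm (T z)" by (rule cs_simple)
      also have "\<dots> \<le> norm z * norm z" by (intro mult_left_mono nT) simp
      finally show ?thesis by (simp add: power2_eq_square)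
    qed
    have "\<forall>z. 0 \<le> Re (cinner z (A z)) \<and> Re (cinner z (A z)) \<le> (norm z)^2"
    proof
      fix z
      show "0 \<le> Re (cinner z (A z)) \<and> Re (cinner z (A z)) \<le> (norm z)^2"
        using bnd[of A z, OF nA[of z]] bnd[of S z, OF nS[of z]] ReS[of z] by simp
    qed
    then show "effect A" using eff by simp
  qed
  then show ?thesis using cond unfolding a_def b_def S_def by simp
qed

end
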